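(* Let $Y,X\sim\mathcal{U}(0,1)$ with copula $C_{Y,X}$ and let $\mu$ be a functional on $\mathcal{C}^\uparrow$ as below. Then $\mathsf{R}_\mu(Y,X)=\mu(\mathcal{S}(C_{Y,X}\vee\Pi))$.
   Context: $\mathcal{C}^\uparrow$ is the class of SI copulas (bivariate copulas $C$ with $C(v,\cdot)$ concave for all $v$). $\mu:\mathcal{C}^\uparrow\to[0,1]$ satisfies $\mu(C)=0$ iff $C=\Pi$ and $\mu(C)=1$ iff $C=M$, where $\Pi(u,v)=uv$, $M(u,v)=\min\{u,v\}$. $\partial_2$ is the partial derivative in the second argument. For measurable $h:(0,1)\to[0,1]$, $h^*$ is the a.e.-unique decreasing function with $\lambda(h^*\le y)=\lambda(h\le y)$ for all $y$; $C^\uparrow(v,u):=\int_0^uh_v^*(t)\,dt$ with $h_v=\partial_2C(v,\cdot)$. The rearranged dependence measure is $\mathsf{R}_\mu(Y,X):=\mu(C^\uparrow_{Y,X})$. Upper product: $D\vee E(u,v):=\int_0^1\min\{\partial_2D(u,t),\partial_2E(v,t)\}\,dt$. For $C\in\mathcal{C}^\uparrow$: $\partial_2^+C(v,t):=\lim_{s\downarrow t}\partial_2C(v,s)$, $f^{-1}(w):=\inf\{t\in[0,1]:f(t)\le w\}$, and $\mathcal{S}(C)(v,u):=\int_0^u(\partial_2^+C(v,\cdot))^{-1}(t)\,dt$. *)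

theory Defs
  imports "HOL-Analysis.Analysis"
begin

text \<open>Bivariate functions are real \<Rightarrow> real \<Rightarrow> real; copulas are normalised to be 0
  outside the unit square, so that equality of copulas is equality of functions.\<close>

definition restrict_sq :: "(real \<Rightarrow> real \<Rightarrow> real) \<Rightarrow> real \<Rightarrow> real \<Rightarrow> real" where
  "restrict_sq f = (\<lambda>u v. if u \<in> {0..1} \<and> v \<in> {0..1} then f u v else 0)"

definition PiC :: "real \<Rightarrow> real \<Rightarrow> real" where
  "PiC = restrict_sq (\<lambda>u v. u * v)"

definition MC :: "real \<Rightarrow> real \<Rightarrow> real" where
  "MC = restrict_sq (\<lambda>u v. min u v)"

definition is_copula :: "(real \<Rightarrow> real \<Rightarrow> real) \<Rightarrow> bool" where
  "is_copula C \<longleftrightarrow>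
     (\<forall>u v. \<not> (u \<in> {0..1} \<and> v \<in> {0..1}) \<longrightarrow> C u v = 0) \<and>
     (\<forall>u\<in>{0..1}. C u 0 = 0 \<and> C 0 u = 0 \<and> C u 1 = u \<and> C 1 u = u) \<and>
     (\<forall>u1 u2 v1 v2. 0 \<le> u1 \<longrightarrow> u1 \<le> u2 \<longrightarrow> u2 \<le> 1 \<longrightarrow> 0 \<le> v1 \<longrightarrow> v1 \<le> v2 \<longrightarrow> v2 \<le> 1
        \<longrightarrow> C u2 v2 - C u2 v1 - C u1 v2 + C u1 v1 \<ge> 0)"

definition is_SI_copula :: "(real \<Rightarrow> real \<Rightarrow> real) \<Rightarrow> bool" where
  "is_SI_copula C \<longleftrightarrow> is_copula C \<and> (\<forall>v\<in>{0..1}. concave_on {0..1} (C v))"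

text \<open>Partial derivative in the second argument (set to 0 where it does not exist,
  which happens only on a null set for copulas).\<close>
definition partial2 :: "(real \<Rightarrow> real \<Rightarrow> real) \<Rightarrow> real \<Rightarrow> real \<Rightarrow> real" where
  "partial2 C v t = (if C v differentiable (at t) then deriv (C v) t else 0)"

text \<open>Decreasing rearrangement on (0,1): a decreasing function with the same
  distribution (it is a.e. unique).\<close>
definition decr_rearr :: "(real \<Rightarrow> real) \<Rightarrow> real \<Rightarrow> real" where
  "decr_rearr h = (SOME g. (\<forall>s t. 0 < s \<longrightarrow> s \<le> t \<longrightarrow> t < 1 \<longrightarrow> g t \<le> g s) \<and>
      (\<forall>y. measure lborel {t\<in>{0<..<1}. g t \<le> y} = measure lborel {t\<in>{0<..<1}. h t \<le> y}))"

definition rearranged :: "(real \<Rightarrow> real \<Rightarrow> real) \<Rightarrow> real \<Rightarrow> real \<Rightarrow> real" where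
  "rearranged C = restrict_sq (\<lambda>v u. integral {0..u} (decr_rearr (partial2 C v)))"

definition Rmu :: "((real \<Rightarrow> real \<Rightarrow> real) \<Rightarrow> real) \<Rightarrow> (real \<Rightarrow> real \<Rightarrow> real) \<Rightarrow> real" where
  "Rmu mu C = mu (rearranged C)"

definition upper_prod :: "(real \<Rightarrow> real \<Rightarrow> real) \<Rightarrow> (real \<Rightarrow> real \<Rightarrow> real) \<Rightarrow> real \<Rightarrow> real \<Rightarrow> real" where
  "upper_prod D E = restrict_sq (\<lambda>u v. integral {0..1} (\<lambda>t. min (partial2 D u t) (partial2 E v t)))"

definition right_partial2 :: "(real \<Rightarrow> real \<Rightarrow> real) \<Rightarrow> real \<Rightarrow> real \<Rightarrow> real" where
  "right_partial2 C v t =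
     Lim (at t within ({t<..<1} \<inter> {s. C v differentiable (at s)})) (\<lambda>s. deriv (C v) s)"

text \<open>Generalised inverse f^{-1}(w) = inf {t in [0,1] : f t <= w}, with inf of the
  empty set (and the value at t = 1) treated as 1.\<close>
definition gen_inv :: "(real \<Rightarrow> real) \<Rightarrow> real \<Rightarrow> real" where
  "gen_inv f w = Inf ({t\<in>{0..<1}. f t \<le> w} \<union> {1})"

definition S_op :: "(real \<Rightarrow> real \<Rightarrow> real) \<Rightarrow> real \<Rightarrow> real \<Rightarrow> real" where
  "S_op C = restrict_sq (\<lambda>v u. integral {0..u} (gen_inv (right_partial2 C v)))"

end

theory Submission
  imports Defs "HOL-Probability.Probability"
begin
definition Qd :: "(real \<Rightarrow> real) \<Rightarrow> real \<Rightarrow> real \<Rightarrow> real" where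
  "Qd g t y = (g y - g t) / (y - t)"

definition DiffSet :: "(real \<Rightarrow> real) \<Rightarrow> real set" where
  "DiffSet g = {t. \<forall>n::nat. \<exists>m::nat. \<forall>p q::rat.
      (0 < \<bar>real_of_rat p - t\<bar> \<and> \<bar>real_of_rat p - t\<bar> < 1 / Suc m \<and>
       0 < \<bar>real_of_rat q - t\<bar> \<and> \<bar>real_of_rat q - t\<bar> < 1 / Suc m) \<longrightarrow>
      \<bar>Qd g t (real_of_rat p) - Qd g t (real_of_rat q)\<bar> \<le> 1 / Suc n}"

lemma DiffSet_borel:
  assumes "continuous_on UNIV g"
  shows "DiffSet g \<in> sets borel"
proof -
  have gm: "g \<in> borel_measurable borel"
    using assms by (rule borel_measurable_continuous_onI)
  note gm[measurable]
  define A where "A n m p q = {t. (0 < \<bar>real_of_rat p - t\<bar> \<and> \<bar>real_of_rat p - t\<bar> < 1 / Suc m \<and>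
       0 < \<bar>real_of_rat q - t\<bar> \<and> \<bar>real_of_rat q - t\<bar> < 1 / Suc m) \<longrightarrow>
      \<bar>Qd g t (real_of_rat p) - Qd g t (real_of_rat q)\<bar> \<le> 1 / Suc n}" for n m :: nat and p q :: rat
  have Ab[measurable]: "A n m p q \<in> sets borel" for n m p q
  proof -
    have f1[measurable]: "(\<lambda>t. Qd g t (real_of_rat p) - Qd g t (real_of_rat q)) \<in> borel_measurable borel"
      unfolding Qd_def by measurable
    have s1: "{t. \<bar>Qd g t (real_of_rat p) - Qd g t (real_of_rat q)\<bar> \<le> 1 / Suc n} \<in> sets borel"
      by measurable
    have s2: "{t::real. 0 < \<bar>real_of_rat p - t\<bar> \<and> \<bar>real_of_rat p - t\<bar> < 1 / Suc m \<and>
       0 < \<bar>real_of_rat q - t\<bar> \<and> \<bar>real_of_rat q - t\<bar> < 1 / Suc m} \<in> sets borel"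
      by measurable
    have "A n m p q = (UNIV - {t::real. 0 < \<bar>real_of_rat p - t\<bar> \<and> \<bar>real_of_rat p - t\<bar> < 1 / Suc m \<and>
       0 < \<bar>real_of_rat q - t\<bar> \<and> \<bar>real_of_rat q - t\<bar> < 1 / Suc m}) \<union>
       {t. \<bar>Qd g t (real_of_rat p) - Qd g t (real_of_rat q)\<bar> \<le> 1 / Suc n}"
      unfolding A_def by auto
    then show ?thesis using s1 s2 by auto
  qed
  have "DiffSet g = (\<Inter>n. \<Union>m. \<Inter>p. \<Inter>q. A n m p q)"
    unfolding DiffSet_def A_def by (simp add: set_eq_iff)
  moreover have "(\<Inter>n. \<Union>m. \<Inter>p. \<Inter>q. A n m p q) \<in> sets borel"
    by (intro sets.countable_INT'' sets.countable_UN'' Ab) auto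
  ultimately show ?thesis by simp
qed

lemma rat_approx:
  fixes f :: "real \<Rightarrow> real"
  assumes "isCont f y" "0 < e" "0 < \<bar>y - t\<bar>" "\<bar>y - t\<bar> < r"
  shows "\<exists>p::rat. 0 < \<bar>real_of_rat p - t\<bar> \<and> \<bar>real_of_rat p - t\<bar> < r \<and> \<bar>f (real_of_rat p) - f y\<bar> < e"
proof -
  obtain d where d: "d > 0" "\<And>x. dist x y < d \<Longrightarrow> dist (f x) (f y) < e"
    using assms(1,2) unfolding continuous_at_eps_delta by blast
  define d' where "d' = min d (min \<bar>y - t\<bar> (r - \<bar>y - t\<bar>))"
  have "d' > 0" using d assms unfolding d'_def by auto
  then obtain x where x: "x \<in> \<rat>" "y < x" "x < y + d'"
    using Rats_dense_in_real[of y "y + d'"] by auto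
  then obtain p where p: "x = real_of_rat p" by (auto elim: Rats_cases)
  have "dist x y < d" using x d'_def by (auto simp: dist_real_def)
  then have fx: "\<bar>f x - f y\<bar> < e" using d by (auto simp: dist_real_def)
  have "d' \<le> r - \<bar>y - t\<bar>" "d' \<le> \<bar>y - t\<bar>" unfolding d'_def by auto
  then have h1: "x - y < r - \<bar>y - t\<bar>" "x - y < \<bar>y - t\<bar>" using x(3) by auto
  moreover have "0 < \<bar>x - t\<bar>" "\<bar>x - t\<bar> < r" using h1 x(2) by arith+
  ultimately show ?thesis using p fx by blast
qed

lemma Qd_isCont:
  assumes "continuous_on UNIV g" "y \<noteq> t"
  shows "isCont (Qd g t) y"
proof -
  have "isCont g y" using assms(1) by (simp add: continuous_on_eq_continuous_at)
  then show ?thesis unfolding Qd_def using assms(2)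
    by (intro continuous_intros) auto
qed

lemma tri2: "\<bar>a - c\<bar> < (e::real) \<Longrightarrow> \<bar>b - c\<bar> < e \<Longrightarrow> \<bar>a - b\<bar> < e + e"
  by arith

lemma tri3: "\<bar>a - b\<bar> \<le> (k::real) \<Longrightarrow> \<bar>a - y\<bar> < (\<bar>y - z\<bar> - k) / 3 \<Longrightarrow> \<bar>b - z\<bar> < (\<bar>y - z\<bar> - k) / 3 \<Longrightarrow> False"
  by (simp add: abs_real_def split: if_splits)

lemma DiffSet_iff:
  assumes cont: "continuous_on UNIV g"
  shows "g differentiable (at t) \<longleftrightarrow> t \<in> DiffSet g"
proof
  assume "g differentiable (at t)"
  then have "DERIV g t :> deriv g t" by (simp add: DERIV_deriv_iff_real_differentiable)
  then have lim: "(Qd g t \<longlongrightarrow> deriv g t) (at t)"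
    unfolding has_field_derivative_iff Qd_def[abs_def] by simp
  show "t \<in> DiffSet g" unfolding DiffSet_def
  proof (safe)
    fix n :: nat
    have e: "(0::real) < 1 / (2 * Suc n)" by simp
    from tendstoD[OF lim e] obtain d where d: "d > 0"
      "\<And>y. y \<noteq> t \<Longrightarrow> dist y t < d \<Longrightarrow> dist (Qd g t y) (deriv g t) < 1 / (2 * Suc n)"
      unfolding eventually_at by blast
    obtain m where m: "inverse (real (Suc m)) < d" using reals_Archimedean[OF d(1)] by blast
    show "\<exists>m. \<forall>p q. 0 < \<bar>real_of_rat p - t\<bar> \<and> \<bar>real_of_rat p - t\<bar> < 1 / real (Suc m) \<and>
                0 < \<bar>real_of_rat q - t\<bar> \<and> \<bar>real_of_rat q - t\<bar> < 1 / real (Suc m) \<longrightarrow>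
                \<bar>Qd g t (real_of_rat p) - Qd g t (real_of_rat q)\<bar> \<le> 1 / real (Suc n)"
    proof (intro exI allI impI)
      fix p q :: rat
      assume pq: "0 < \<bar>real_of_rat p - t\<bar> \<and> \<bar>real_of_rat p - t\<bar> < 1 / real (Suc m) \<and>
                0 < \<bar>real_of_rat q - t\<bar> \<and> \<bar>real_of_rat q - t\<bar> < 1 / real (Suc m)"
      have a: "\<bar>Qd g t (real_of_rat p) - deriv g t\<bar> < 1 / (2 * Suc n)"
        using d(2)[of "real_of_rat p"] pq m by (auto simp: dist_real_def inverse_eq_divide)
      have b: "\<bar>Qd g t (real_of_rat q) - deriv g t\<bar> < 1 / (2 * Suc n)"
        using d(2)[of "real_of_rat q"] pq m by (auto simp: dist_real_def inverse_eq_divide)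
      have "1 / real (2 * Suc n) + 1 / (2 * Suc n) = 1 / Suc n" by (simp add: field_simps)
      then show "\<bar>Qd g t (real_of_rat p) - Qd g t (real_of_rat q)\<bar> \<le> 1 / real (Suc n)"
        using tri2[OF a b] by simp
    qed
  qed
next
  assume tD: "t \<in> DiffSet g"
  have R: "\<exists>m. \<forall>y z. 0 < \<bar>y - t\<bar> \<and> \<bar>y - t\<bar> < 1 / Suc m \<and> 0 < \<bar>z - t\<bar> \<and> \<bar>z - t\<bar> < 1 / Suc m
            \<longrightarrow> \<bar>Qd g t y - Qd g t z\<bar> \<le> 1 / Suc n" for n
  proof -
    obtain m where m: "\<And>p q::rat. 0 < \<bar>real_of_rat p - t\<bar> \<and> \<bar>real_of_rat p - t\<bar> < 1 / Suc m \<and>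
       0 < \<bar>real_of_rat q - t\<bar> \<and> \<bar>real_of_rat q - t\<bar> < 1 / Suc m \<Longrightarrow>
      \<bar>Qd g t (real_of_rat p) - Qd g t (real_of_rat q)\<bar> \<le> 1 / Suc n"
      using tD unfolding DiffSet_def by blast
    show ?thesis
    proof (intro exI allI impI)
      fix y z assume yz: "0 < \<bar>y - t\<bar> \<and> \<bar>y - t\<bar> < 1 / Suc m \<and> 0 < \<bar>z - t\<bar> \<and> \<bar>z - t\<bar> < 1 / Suc m"
      show "\<bar>Qd g t y - Qd g t z\<bar> \<le> 1 / Suc n"
      proof (rule ccontr)
        assume ne: "\<not> \<bar>Qd g t y - Qd g t z\<bar> \<le> 1 / Suc n"
        define e where "e = (\<bar>Qd g t y - Qd g t z\<bar> - 1 / Suc n) / 3"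
        have e: "e > 0" using ne unfolding e_def by simp
        have cy: "isCont (Qd g t) y" using yz by (intro Qd_isCont cont) auto
        have cz: "isCont (Qd g t) z" using yz by (intro Qd_isCont cont) auto
        obtain p where p: "0 < \<bar>real_of_rat p - t\<bar>" "\<bar>real_of_rat p - t\<bar> < 1 / Suc m"
          "\<bar>Qd g t (real_of_rat p) - Qd g t y\<bar> < e"
          using rat_approx[OF cy e, of t "1 / Suc m"] yz by blast
        obtain q where q: "0 < \<bar>real_of_rat q - t\<bar>" "\<bar>real_of_rat q - t\<bar> < 1 / Suc m"
          "\<bar>Qd g t (real_of_rat q) - Qd g t z\<bar> < e"
          using rat_approx[OF cz e, of t "1 / Suc m"] yz by blast
        have "\<bar>Qd g t (real_of_rat p) - Qd g t (real_of_rat q)\<bar> \<le> 1 / Suc n"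
          using m p q by blast
        then show False using tri3 p(3) q(3) unfolding e_def by blast
      qed
    qed
  qed
  have "cauchy_filter (filtermap (Qd g t) (at t))"
    unfolding cauchy_filter_metric_filtermap
  proof (intro allI impI)
    fix e :: real assume "e > 0"
    obtain n where n: "inverse (real (Suc n)) < e" using reals_Archimedean[OF \<open>e > 0\<close>] by blast
    obtain m where m: "\<And>y z. 0 < \<bar>y - t\<bar> \<and> \<bar>y - t\<bar> < 1 / Suc m \<and> 0 < \<bar>z - t\<bar> \<and> \<bar>z - t\<bar> < 1 / Suc m
            \<Longrightarrow> \<bar>Qd g t y - Qd g t z\<bar> \<le> 1 / Suc n" using R by blast
    show "\<exists>P. eventually P (at t) \<and> (\<forall>x y. P x \<and> P y \<longrightarrow> dist (Qd g t x) (Qd g t y) < e)"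
    proof (intro exI conjI allI impI)
      show "eventually (\<lambda>y. 0 < \<bar>y - t\<bar> \<and> \<bar>y - t\<bar> < 1 / Suc m) (at t)"
        unfolding eventually_at by (rule exI[of _ "1 / Suc m"]) (auto simp: dist_real_def)
      fix x y assume "(0 < \<bar>x - t\<bar> \<and> \<bar>x - t\<bar> < 1 / Suc m) \<and> (0 < \<bar>y - t\<bar> \<and> \<bar>y - t\<bar> < 1 / Suc m)"
      then have "\<bar>Qd g t x - Qd g t y\<bar> \<le> 1 / Suc n" using m by blast
      then show "dist (Qd g t x) (Qd g t y) < e" using n by (simp add: dist_real_def inverse_eq_divide)
    qed
  qed
  then obtain c where c: "filtermap (Qd g t) (at t) \<le> nhds c"
    using cauchy_filter_complete_converges[of "filtermap (Qd g t) (at t)" UNIV]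
    by (auto simp: complete_UNIV filtermap_bot_iff)
  then have "(Qd g t \<longlongrightarrow> c) (at t)" by (simp add: filterlim_def)
  then have "DERIV g t :> c" unfolding has_field_derivative_iff Qd_def[abs_def] by simp
  then show "g differentiable (at t)"
    using DERIV_deriv_iff_real_differentiable DERIV_imp_deriv by metis
qed

lemma cop_incr:
  assumes C: "is_copula C" and v: "v \<in> {0..1}" and ab: "0 \<le> a" "a \<le> b" "b \<le> 1"
  shows "C v a \<le> C v b" "C v b - C v a \<le> b - a"
proof -
  have inc: "\<And>u1 u2 v1 v2. 0 \<le> u1 \<Longrightarrow> u1 \<le> u2 \<Longrightarrow> u2 \<le> 1 \<Longrightarrow> 0 \<le> v1 \<Longrightarrow> v1 \<le> v2 \<Longrightarrow> v2 \<le> 1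
        \<Longrightarrow> C u2 v2 - C u2 v1 - C u1 v2 + C u1 v1 \<ge> 0"
    using C unfolding is_copula_def by blast
  have bd: "\<And>u. u \<in> {0..1} \<Longrightarrow> C u 0 = 0 \<and> C 0 u = 0 \<and> C u 1 = u \<and> C 1 u = u"
    using C unfolding is_copula_def by blast
  have "C v b - C v a - C 0 b + C 0 a \<ge> 0" using inc[of 0 v a b] v ab by auto
  moreover have "C 0 b = 0" "C 0 a = 0" using bd[of a] bd[of b] ab by auto
  ultimately show "C v a \<le> C v b" by simp
  have "C 1 b - C 1 a - C v b + C v a \<ge> 0" using inc[of v 1 a b] v ab by auto
  moreover have "C 1 b = b" "C 1 a = a" using bd[of a] bd[of b] ab by auto
  ultimately show "C v b - C v a \<le> b - a" by simp
qed

lemma cop_lip: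
  assumes C: "is_copula C" and v: "v \<in> {0..1}" and ab: "a \<in> {0..1}" "b \<in> {0..1}"
  shows "\<bar>C v a - C v b\<bar> \<le> \<bar>a - b\<bar>"
proof (cases "a \<le> b")
  case True then show ?thesis using cop_incr[OF C v, of a b] ab by auto
next
  case False then show ?thesis using cop_incr[OF C v, of b a] ab by auto
qed

definition fc :: "(real \<Rightarrow> real \<Rightarrow> real) \<Rightarrow> real \<Rightarrow> real \<Rightarrow> real" where
  "fc C v = (\<lambda>t. C v (max 0 (min 1 t)))"

lemma fc_cont:
  assumes C: "is_copula C" and v: "v \<in> {0..1}"
  shows "continuous_on UNIV (fc C v)"
proof -
  have "1-lipschitz_on UNIV (fc C v)"
  proof (rule lipschitz_onI)
    fix x y :: real
    have "\<bar>C v (max 0 (min 1 x)) - C v (max 0 (min 1 y))\<bar> \<le> \<bar>max 0 (min 1 x) - max 0 (min 1 y)\<bar>"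
      by (rule cop_lip[OF C v]) auto
    also have "\<dots> \<le> \<bar>x - y\<bar>" by (simp add: abs_real_def max_def min_def)
    finally show "dist (fc C v x) (fc C v y) \<le> 1 * dist x y"
      by (simp add: fc_def dist_real_def)
  qed simp
  then show ?thesis by (rule lipschitz_on_continuous_on)
qed

lemma fc_deriv:
  assumes t: "t \<in> {0<..<1}"
  shows "(C v has_field_derivative D) (at t) \<longleftrightarrow> (fc C v has_field_derivative D) (at t)"
proof
  assume "(C v has_field_derivative D) (at t)"
  then show "(fc C v has_field_derivative D) (at t)"
    by (rule has_field_derivative_transform_within_open[of _ _ _ "{0<..<1}"]) (use t in \<open>auto simp: fc_def\<close>)
next
  assume "(fc C v has_field_derivative D) (at t)"
  then show "(C v has_field_derivative D) (at t)"
    by (rule has_field_derivative_transform_within_open[of _ _ _ "{0<..<1}"]) (use t in \<open>auto simp: fc_def\<close>)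
qed

lemma fc_differentiable:
  assumes t: "t \<in> {0<..<1}"
  shows "C v differentiable (at t) \<longleftrightarrow> fc C v differentiable (at t)"
proof
  assume "C v differentiable (at t)"
  then have "DERIV (C v) t :> deriv (C v) t" by (simp add: DERIV_deriv_iff_real_differentiable)
  then have "DERIV (fc C v) t :> deriv (C v) t" using fc_deriv[OF t] by blast
  then show "fc C v differentiable (at t)" using real_differentiable_def by blast
next
  assume "fc C v differentiable (at t)"
  then have "DERIV (fc C v) t :> deriv (fc C v) t" by (simp add: DERIV_deriv_iff_real_differentiable)
  then have "DERIV (C v) t :> deriv (fc C v) t" using fc_deriv[OF t] by blast
  then show "C v differentiable (at t)" using real_differentiable_def by blast
qed

definition hh :: "(real \<Rightarrow> real \<Rightarrow> real) \<Rightarrow> real \<Rightarrow> real \<Rightarrow> real" where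
  "hh C v t = (if t \<in> {0<..<1} then partial2 C v t else 0)"

lemma hh_range:
  assumes C: "is_copula C" and v: "v \<in> {0..1}"
  shows "0 \<le> hh C v t \<and> hh C v t \<le> 1"
proof (cases "t \<in> {0<..<1} \<and> C v differentiable (at t)")
  case True
  then have t: "t \<in> {0<..<1}" and dif: "C v differentiable (at t)" by auto
  then have "DERIV (C v) t :> deriv (C v) t" by (simp add: DERIV_deriv_iff_real_differentiable)
  then have lim: "((\<lambda>y. (C v y - C v t) / (y - t)) \<longlongrightarrow> deriv (C v) t) (at t)"
    by (simp add: has_field_derivative_iff)
  have ev: "eventually (\<lambda>y. y \<in> {0<..<1} \<and> y \<noteq> t) (at t)"
    unfolding eventually_at using t
    by (intro exI[of _ "min t (1 - t)"]) (auto simp: dist_real_def)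
  have q: "0 \<le> (C v y - C v t) / (y - t) \<and> (C v y - C v t) / (y - t) \<le> 1"
    if "y \<in> {0<..<1}" "y \<noteq> t" for y
  proof (cases "y < t")
    case True
    then have "C v y \<le> C v t" "C v t - C v y \<le> t - y" using cop_incr[OF C v, of y t] that t by auto
    then show ?thesis using True by (auto simp: divide_simps)
  next
    case False
    then have "C v t \<le> C v y" "C v y - C v t \<le> y - t" using cop_incr[OF C v, of t y] that t by auto
    then show ?thesis using False that by (auto simp: divide_simps)
  qed
  have "0 \<le> deriv (C v) t"
    by (rule tendsto_lowerbound[OF lim]) (use ev q in \<open>auto elim: eventually_mono\<close>)
  moreover have "deriv (C v) t \<le> 1"
    by (rule tendsto_upperbound[OF lim]) (use ev q in \<open>auto elim: eventually_mono\<close>)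
  ultimately show ?thesis using t dif by (simp add: hh_def partial2_def)
next
  case False
  then show ?thesis by (auto simp: hh_def partial2_def)
qed

lemma quot_meas: assumes gm[measurable]: "(g::real\<Rightarrow>real) \<in> borel_measurable borel"
  shows "(\<lambda>t. (g (t + 1 / Suc i) - g t) * real (Suc i)) \<in> borel_measurable borel"
  by measurable

lemma hh_measurable:
  assumes C: "is_copula C" and v: "v \<in> {0..1}"
  shows "hh C v \<in> borel_measurable borel"
proof -
  let ?g = "fc C v"
  have gc: "continuous_on UNIV ?g" by (rule fc_cont[OF C v])
  have gm: "?g \<in> borel_measurable borel" using gc by (rule borel_measurable_continuous_onI)
  have S[measurable]: "{0<..<1} \<inter> DiffSet ?g \<in> sets borel"
    using DiffSet_borel[OF gc] by (intro sets.Int) simp_all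
  define u where "u i t = (if t \<in> {0<..<1} \<inter> DiffSet ?g then (?g (t + 1 / Suc i) - ?g t) * Suc i else 0)" for i t
  have um: "u i \<in> borel_measurable borel" for i
  proof -
    have S': "({0<..<1} \<inter> DiffSet ?g) \<inter> space borel \<in> sets borel"
      using S by (simp only: space_borel Int_UNIV_right)
    have f: "(\<lambda>t. (?g (t + 1 / Suc i) - ?g t) * Suc i) \<in> borel_measurable borel"
      by (rule quot_meas[OF gm])
    show ?thesis unfolding u_def by (rule measurable_If_set[OF f _ S']) simp
  qed
  show ?thesis
  proof (rule borel_measurable_LIMSEQ_real[OF _ um])
    fix t :: real
    show "(\<lambda>i. u i t) \<longlonglongrightarrow> hh C v t"
    proof (cases "t \<in> {0<..<1} \<inter> DiffSet ?g")
      case True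
      then have t: "t \<in> {0<..<1}" and dg: "?g differentiable (at t)" using DiffSet_iff[OF gc] by auto
      then have dC: "C v differentiable (at t)" using fc_differentiable by blast
      have "DERIV (C v) t :> deriv (C v) t" using dC by (simp add: DERIV_deriv_iff_real_differentiable)
      then have "DERIV ?g t :> deriv (C v) t" using fc_deriv[OF t] by blast
      then have lim: "(Qd ?g t \<longlongrightarrow> deriv (C v) t) (at t)"
        unfolding has_field_derivative_iff Qd_def[abs_def] by simp
      have sq: "filterlim (\<lambda>i. t + 1 / Suc i) (at t) sequentially"
        unfolding filterlim_at
      proof
        show "\<forall>\<^sub>F x in sequentially. t + 1 / real (Suc x) \<in> UNIV \<and> t + 1 / real (Suc x) \<noteq> t" by simp
        have "(\<lambda>i. t + inverse (real (Suc i))) \<longlonglongrightarrow> t + 0"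
          by (intro tendsto_intros LIMSEQ_inverse_real_of_nat)
        then show "(\<lambda>i. t + 1 / real (Suc i)) \<longlonglongrightarrow> t" by (simp add: inverse_eq_divide)
      qed
      have "(\<lambda>i. Qd ?g t (t + 1 / Suc i)) \<longlonglongrightarrow> deriv (C v) t"
        by (rule filterlim_compose[OF lim sq])
      moreover have "Qd ?g t (t + 1 / Suc i) = u i t" for i
        using True by (simp add: Qd_def u_def)
      moreover have "hh C v t = deriv (C v) t" using t dC by (simp add: hh_def partial2_def)
      ultimately show ?thesis by simp
    next
      case False
      have "hh C v t = 0"
      proof (cases "t \<in> {0<..<1}")
        case True
        then have "\<not> ?g differentiable (at t)" using False DiffSet_iff[OF gc] by blast
        then have "\<not> C v differentiable (at t)" using fc_differentiable[OF True] by blast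
        then show ?thesis by (simp add: hh_def partial2_def)
      qed (auto simp: hh_def)
      moreover have "u i t = 0" for i using False unfolding u_def by auto
      ultimately show ?thesis by simp
    qed
  qed
qed

definition M0 :: "real measure" where "M0 = restrict_space lborel {0..1}"
definition PD :: "(real \<Rightarrow> real \<Rightarrow> real) \<Rightarrow> real \<Rightarrow> real measure" where
  "PD C v = distr M0 borel (hh C v)"
definition Fd :: "(real \<Rightarrow> real \<Rightarrow> real) \<Rightarrow> real \<Rightarrow> real \<Rightarrow> real" where
  "Fd C v = cdf (PD C v)"

lemma space_M0[simp]: "space M0 = {0..1}"
  by (simp add: M0_def space_restrict_space)

lemma prob_M0: "prob_space M0"
  unfolding M0_def by (rule prob_space_restrict_space) auto

lemma hh_meas_M0:
  assumes C: "is_copula C" and v: "v \<in> {0..1}"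
  shows "hh C v \<in> borel_measurable M0"
proof -
  have "hh C v \<in> borel_measurable lborel"
    using hh_measurable[OF C v] by (simp add: measurable_lborel1)
  then show ?thesis unfolding M0_def by (rule measurable_restrict_space1)
qed

lemma rd: assumes C: "is_copula C" and v: "v \<in> {0..1}"
  shows "real_distribution (PD C v)"
  unfolding PD_def using prob_space.real_distribution_distr[OF prob_M0 hh_meas_M0[OF C v]] .

lemma measure_M0: "A \<subseteq> {0..1} \<Longrightarrow> measure M0 A = measure lborel A"
  unfolding M0_def by (rule measure_restrict_space) auto

lemma PD_measure:
  assumes C: "is_copula C" and v: "v \<in> {0..1}" and A: "A \<in> sets borel"
  shows "measure (PD C v) A = measure lborel {t\<in>{0..1}. hh C v t \<in> A}"
proof -
  have "measure (PD C v) A = measure M0 (hh C v -` A \<inter> space M0)"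
    unfolding PD_def using hh_meas_M0[OF C v] A by (rule measure_distr)
  also have "\<dots> = measure lborel {t\<in>{0..1}. hh C v t \<in> A}"
    by (subst measure_M0) (auto intro!: arg_cong[where f="measure lborel"])
  finally show ?thesis .
qed

lemma Fd_eq:
  assumes C: "is_copula C" and v: "v \<in> {0..1}"
  shows "Fd C v y = measure lborel {t\<in>{0<..<1}. partial2 C v t \<le> y}"
proof -
  have hm: "hh C v \<in> borel_measurable borel" by (rule hh_measurable[OF C v])
  have "Fd C v y = measure lborel {t\<in>{0..1}. hh C v t \<in> {..y}}"
    unfolding Fd_def cdf_def by (rule PD_measure[OF C v]) simp
  also have "{t\<in>{0..1}. hh C v t \<in> {..y}} = {t\<in>{0<..<1}. hh C v t \<le> y} \<union> ({t\<in>{0..1}. hh C v t \<in> {..y}} \<inter> {0,1})"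
    by auto
  also have "measure lborel \<dots> = measure lborel {t\<in>{0<..<1}. hh C v t \<le> y}"
  proof (rule measure_Un_null_set)
    have "{t\<in>{0<..<1}. hh C v t \<le> y} = {0<..<1} \<inter> (hh C v -` {..y} \<inter> space borel)" by auto
    also have "\<dots> \<in> sets borel" by (intro sets.Int measurable_sets[OF hm]) auto
    finally show "{t\<in>{0<..<1}. hh C v t \<le> y} \<in> sets lborel" by simp
    show "{t\<in>{0..1}. hh C v t \<in> {..y}} \<inter> {0,1} \<in> null_sets lborel"
      by (rule finite_imp_null_set_lborel) (simp add: finite_Int)
  qed
  also have "{t\<in>{0<..<1}. hh C v t \<le> y} = {t\<in>{0<..<1}. partial2 C v t \<le> y}"
    by (auto simp: hh_def)
  finally show ?thesis .
qed

lemma Fd_neg: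
  assumes C: "is_copula C" and v: "v \<in> {0..1}" and y: "y < 0"
  shows "Fd C v y = 0"
proof -
  have pr: "0 \<le> partial2 C v t \<and> partial2 C v t \<le> 1" if "t \<in> {0<..<1}" for t
    using hh_range[OF C v, of t] that by (simp add: hh_def)
  have "{t\<in>{0<..<1}. partial2 C v t \<le> y} = {}"
    using pr y by force
  note se = this
  have e: "measure lborel {t\<in>{0<..<1}. partial2 C v t \<le> y} = measure lborel ({}::real set)" by (simp only: se)
  show ?thesis using Fd_eq[OF C v, of y] e by simp
qed

lemma Fd_ge1:
  assumes C: "is_copula C" and v: "v \<in> {0..1}" and y: "1 \<le> y"
  shows "Fd C v y = 1"
proof -
  have pr: "0 \<le> partial2 C v t \<and> partial2 C v t \<le> 1" if "t \<in> {0<..<1}" for t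
    using hh_range[OF C v, of t] that by (simp add: hh_def)
  have "{t\<in>{0<..<1}. partial2 C v t \<le> y} = {0<..<1}"
    using pr y by force
  note se = this
  have e: "measure lborel {t\<in>{0<..<1}. partial2 C v t \<le> y} = measure lborel {0<..<1::real}" by (simp only: se)
  show ?thesis using Fd_eq[OF C v, of y] e by simp
qed

lemma HL_int:
  fixes \<phi> :: "real \<Rightarrow> real"
  assumes m: "\<phi> \<in> borel_measurable borel" and b: "\<And>x. \<bar>\<phi> x\<bar> \<le> B"
  shows "integral {0..1} \<phi> = integral\<^sup>L M0 \<phi>"
proof -
  have mi[measurable]: "\<phi> \<in> borel_measurable lborel" using m by (simp add: measurable_lborel1)
  have si: "set_integrable lborel {0..1} \<phi>"
    unfolding set_integrable_def
    by (rule integrableI_bounded_set[where A="{0..1}" and B=B]) (use b in \<open>auto simp: indicator_def\<close>)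
  have "integral {0..1} \<phi> = (LINT x : {0..1} | lborel. \<phi> x)"
    using set_borel_integral_eq_integral(2)[OF si] by simp
  also have "\<dots> = integral\<^sup>L M0 \<phi>"
    unfolding M0_def set_lebesgue_integral_def by (subst integral_restrict_space) auto
  finally show ?thesis .
qed

lemma partial2_PiC:
  assumes w: "w \<in> {0..1}" and s: "s \<in> {0<..<1}"
  shows "partial2 PiC w s = w"
proof -
  have "((\<lambda>s. w * s) has_field_derivative w) (at s)" by (auto intro!: derivative_eq_intros)
  then have d: "(PiC w has_field_derivative w) (at s)"
    by (rule has_field_derivative_transform_within_open[of _ _ _ "{0<..<1}"])
       (use s w in \<open>auto simp: PiC_def restrict_sq_def\<close>)
  then have "PiC w differentiable (at s)" using real_differentiable_def by blast
  moreover have "deriv (PiC w) s = w" using d by (rule DERIV_imp_deriv)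
  ultimately show ?thesis by (simp add: partial2_def)
qed

lemma E_eq:
  assumes C: "is_copula C" and v: "v \<in> {0..1}" and w: "w \<in> {0..1}"
  shows "upper_prod C PiC v w = integral\<^sup>L (PD C v) (\<lambda>x. min x w)"
proof -
  have "upper_prod C PiC v w = integral {0..1} (\<lambda>s. min (partial2 C v s) (partial2 PiC w s))"
    using v w by (simp add: upper_prod_def restrict_sq_def)
  also have "\<dots> = integral {0..1} (\<lambda>s. min (hh C v s) w)"
    by (rule integral_spike[of "{0,1}"]) (auto simp: hh_def partial2_PiC[OF w])
  also have "\<dots> = integral\<^sup>L M0 (\<lambda>s. min (hh C v s) w)"
  proof (rule HL_int)
    show "(\<lambda>s. min (hh C v s) w) \<in> borel_measurable borel"
      using hh_measurable[OF C v] by measurable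
    show "\<bar>min (hh C v x) w\<bar> \<le> 1" for x using hh_range[OF C v, of x] w by auto
  qed
  also have "\<dots> = integral\<^sup>L (PD C v) (\<lambda>x. min x w)"
    unfolding PD_def by (rule integral_distr[symmetric]) (use hh_meas_M0[OF C v] in auto)
  finally show ?thesis .
qed

lemma PD_integrable:
  fixes f :: "real \<Rightarrow> real"
  assumes C: "is_copula C" and v: "v \<in> {0..1}"
    and f: "f \<in> borel_measurable borel" and b: "\<And>x. \<bar>f x\<bar> \<le> B"
  shows "integrable (PD C v) f"
proof -
  interpret real_distribution "PD C v" by (rule rd[OF C v])
  have fm: "f \<in> borel_measurable (PD C v)"
    using f by (simp add: PD_def)
  have ae: "AE x in PD C v. norm (f x) \<le> B" by (rule AE_I2) (use b in simp)
  show ?thesis by (rule integrable_const_bound[OF ae fm])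
qed

lemma PD_prob_gt:
  assumes C: "is_copula C" and v: "v \<in> {0..1}"
  shows "measure (PD C v) {w<..} = 1 - Fd C v w"
proof -
  interpret real_distribution "PD C v" by (rule rd[OF C v])
  have e: "UNIV - {..w} = {w<..}" by auto
  have "prob (space (PD C v) - {..w}) = 1 - prob {..w}" by (rule prob_compl) simp
  then show ?thesis unfolding e space_eq_univ Fd_def cdf_def .
qed

lemma minlow: "(w1::real) \<le> w2 \<Longrightarrow> (w2 - w1) * indicator {w2<..} x \<le> min x w2 - min x w1"
  by (auto simp: indicator_def min_def)
lemma minup: "(w1::real) \<le> w2 \<Longrightarrow> min x w2 - min x w1 \<le> (w2 - w1) * indicator {w1<..} x"
  by (auto simp: indicator_def min_def)

lemma E_bounds:
  assumes C: "is_copula C" and v: "v \<in> {0..1}" and w: "0 \<le> w1" "w1 \<le> w2" "w2 \<le> 1"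
  shows "(w2 - w1) * (1 - Fd C v w2) \<le> upper_prod C PiC v w2 - upper_prod C PiC v w1"
    and "upper_prod C PiC v w2 - upper_prod C PiC v w1 \<le> (w2 - w1) * (1 - Fd C v w1)"
proof -
  let ?P = "PD C v"
  have sp: "space (PD C v) = UNIV" by (simp add: PD_def)
  have im: "integrable ?P (\<lambda>x. min x w)" if "w \<in> {0..1}" for w
  proof -
    have "integrable M0 (\<lambda>s. min (hh C v s) w)"
    proof -
      interpret prob_space M0 by (rule prob_M0)
      show ?thesis
        by (rule integrable_const_bound[where B=1])
           (use that hh_range[OF C v] hh_meas_M0[OF C v] in \<open>auto simp: abs_le_iff\<close>)
    qed
    then show ?thesis unfolding PD_def
      by (subst integrable_distr_eq) (use hh_meas_M0[OF C v] in auto)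
  qed
  have ii: "integrable ?P (\<lambda>x. (w2 - w1) * indicator A x)" if "A \<in> sets borel" for A
    by (rule PD_integrable[OF C v, where B="\<bar>w2 - w1\<bar>"]) (use that in \<open>auto simp: indicator_def\<close>)
  have diff: "upper_prod C PiC v w2 - upper_prod C PiC v w1 = integral\<^sup>L ?P (\<lambda>x. min x w2 - min x w1)"
    using w by (simp add: E_eq[OF C v] Bochner_Integration.integral_diff[OF im im])
  have ind: "integral\<^sup>L ?P (\<lambda>x. (w2 - w1) * indicator {w<..} x) = (w2 - w1) * (1 - Fd C v w)" for w :: real
  proof -
    have "integral\<^sup>L ?P (\<lambda>x. (w2 - w1) * indicator {w<..} x) = (w2 - w1) * integral\<^sup>L ?P (indicator {w<..})"
      by (rule integral_mult_right_zero)
    also have "\<dots> = (w2 - w1) * measure ?P {w<..}" using sp by simp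
    finally show ?thesis using PD_prob_gt[OF C v, of w] by simp
  qed
  have "integral\<^sup>L ?P (\<lambda>x. (w2 - w1) * indicator {w2<..} x) \<le> integral\<^sup>L ?P (\<lambda>x. min x w2 - min x w1)"
    by (rule integral_mono[OF ii]) (use w im minlow in auto)
  then show "(w2 - w1) * (1 - Fd C v w2) \<le> upper_prod C PiC v w2 - upper_prod C PiC v w1"
    using diff ind[of w2] ind[of w1] by linarith
  have "integral\<^sup>L ?P (\<lambda>x. min x w2 - min x w1) \<le> integral\<^sup>L ?P (\<lambda>x. (w2 - w1) * indicator {w1<..} x)"
    by (rule integral_mono[OF _ ii]) (use w im minup in auto)
  then show "upper_prod C PiC v w2 - upper_prod C PiC v w1 \<le> (w2 - w1) * (1 - Fd C v w1)"
    using diff ind[of w2] ind[of w1] by linarith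
qed

lemma Fd_mono:
  assumes C: "is_copula C" and v: "v \<in> {0..1}" and "x \<le> y"
  shows "Fd C v x \<le> Fd C v y"
proof -
  interpret real_distribution "PD C v" by (rule rd[OF C v])
  show ?thesis unfolding Fd_def using assms(3) by (rule cdf_nondecreasing)
qed

lemma quot_upper:
  assumes C: "is_copula C" and v: "v \<in> {0..1}" and s: "0 \<le> s" and y: "s < y" "y \<le> 1"
  shows "(upper_prod C PiC v y - upper_prod C PiC v s) / (y - s) \<le> 1 - Fd C v s"
    and "1 - Fd C v y \<le> (upper_prod C PiC v y - upper_prod C PiC v s) / (y - s)"
proof -
  have b1: "upper_prod C PiC v y - upper_prod C PiC v s \<le> (y - s) * (1 - Fd C v s)"
    using E_bounds(2)[OF C v s _ y(2)] y by simp
  have b2: "(y - s) * (1 - Fd C v y) \<le> upper_prod C PiC v y - upper_prod C PiC v s"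
    using E_bounds(1)[OF C v s _ y(2)] y by simp
  have p: "y - s > 0" using y by simp
  show "(upper_prod C PiC v y - upper_prod C PiC v s) / (y - s) \<le> 1 - Fd C v s"
    using b1 p by (simp add: pos_divide_le_eq mult.commute)
  show "1 - Fd C v y \<le> (upper_prod C PiC v y - upper_prod C PiC v s) / (y - s)"
    using b2 p by (simp add: pos_le_divide_eq mult.commute)
qed

lemma quot_lower:
  assumes C: "is_copula C" and v: "v \<in> {0..1}" and y: "0 \<le> y" "y < s" and s: "s \<le> 1"
  shows "1 - Fd C v s \<le> (upper_prod C PiC v y - upper_prod C PiC v s) / (y - s)"
    and "(upper_prod C PiC v y - upper_prod C PiC v s) / (y - s) \<le> 1 - Fd C v y"
proof -
  have e: "(upper_prod C PiC v y - upper_prod C PiC v s) / (y - s) = (upper_prod C PiC v s - upper_prod C PiC v y) / (s - y)"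
    by (simp add: divide_simps) (simp add: algebra_simps)
  show "1 - Fd C v s \<le> (upper_prod C PiC v y - upper_prod C PiC v s) / (y - s)"
    unfolding e by (rule quot_upper(2)[OF C v y(1) y(2) s])
  show "(upper_prod C PiC v y - upper_prod C PiC v s) / (y - s) \<le> 1 - Fd C v y"
    unfolding e by (rule quot_upper(1)[OF C v y(1) y(2) s])
qed

lemma deriv_val:
  assumes C: "is_copula C" and v: "v \<in> {0..1}" and s: "s \<in> {0<..<1}"
    and dif: "upper_prod C PiC v differentiable (at s)"
  shows "deriv (upper_prod C PiC v) s = 1 - Fd C v s"
proof -
  let ?E = "upper_prod C PiC v"
  let ?Q = "\<lambda>y. (?E y - ?E s) / (y - s)"
  have "DERIV ?E s :> deriv ?E s" using dif by (simp add: DERIV_deriv_iff_real_differentiable)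
  then have lim: "(?Q \<longlongrightarrow> deriv ?E s) (at s)" by (simp add: has_field_derivative_iff)
  then have limr: "(?Q \<longlongrightarrow> deriv ?E s) (at_right s)" and liml: "(?Q \<longlongrightarrow> deriv ?E s) (at_left s)"
    by (auto simp: filterlim_at_split)
  have evr: "eventually (\<lambda>y. ?Q y \<le> 1 - Fd C v s) (at_right s)"
    unfolding eventually_at_right_field using s
    by (intro exI[of _ 1]) (auto intro!: quot_upper(1)[OF C v])
  have evl: "eventually (\<lambda>y. 1 - Fd C v s \<le> ?Q y) (at_left s)"
    unfolding eventually_at_left_field using s
    by (intro exI[of _ 0]) (auto intro!: quot_lower(1)[OF C v])
  have "deriv ?E s \<le> 1 - Fd C v s"
    by (rule tendsto_upperbound[OF limr evr]) simp
  moreover have "1 - Fd C v s \<le> deriv ?E s"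
    by (rule tendsto_lowerbound[OF liml evl]) simp
  ultimately show ?thesis by simp
qed

lemma cont_diff:
  assumes C: "is_copula C" and v: "v \<in> {0..1}" and s: "s \<in> {0<..<1}"
    and ct: "isCont (Fd C v) s"
  shows "upper_prod C PiC v differentiable (at s)"
proof -
  let ?E = "upper_prod C PiC v"
  let ?Q = "\<lambda>y. (?E y - ?E s) / (y - s)"
  have g0: "((\<lambda>y. \<bar>Fd C v y - Fd C v s\<bar>) \<longlongrightarrow> 0) (at s)"
  proof -
    have "((\<lambda>y. Fd C v y - Fd C v s) \<longlongrightarrow> Fd C v s - Fd C v s) (at s)"
      using ct by (intro tendsto_intros) (simp add: isCont_def)
    then show ?thesis by (intro tendsto_rabs_zero) simp
  qed
  have ev: "eventually (\<lambda>y. norm (?Q y - (1 - Fd C v s)) \<le> \<bar>Fd C v y - Fd C v s\<bar>) (at s)"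
    unfolding eventually_at
  proof (intro exI[of _ "min s (1 - s)"] conjI ballI impI)
    show "0 < min s (1 - s)" using s by simp
    fix y assume "y \<in> UNIV" and y: "y \<noteq> s \<and> dist y s < min s (1 - s)"
    then have y01: "0 \<le> y" "y \<le> 1" by (auto simp: dist_real_def)
    show "norm (?Q y - (1 - Fd C v s)) \<le> \<bar>Fd C v y - Fd C v s\<bar>"
    proof (cases "s < y")
      case True
      have "Fd C v s \<le> Fd C v y" using Fd_mono[OF C v] True by simp
      then show ?thesis using quot_upper[OF C v _ True y01(2)] s by auto
    next
      case False
      then have ys: "y < s" using y by auto
      have "Fd C v y \<le> Fd C v s" using Fd_mono[OF C v] ys by simp
      then show ?thesis using quot_lower[OF C v y01(1) ys] s by auto
    qed
  qed
  have "((\<lambda>y. ?Q y - (1 - Fd C v s)) \<longlongrightarrow> 0) (at s)"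
    by (rule Lim_null_comparison[OF ev g0])
  then have "(?Q \<longlongrightarrow> 1 - Fd C v s) (at s)" by (rule LIM_zero_cancel)
  then have "DERIV ?E s :> 1 - Fd C v s" by (simp add: has_field_derivative_iff)
  then show ?thesis using real_differentiable_def by blast
qed

lemma exists_cont:
  assumes C: "is_copula C" and v: "v \<in> {0..1}" and ab: "a < b"
  shows "\<exists>s. a < s \<and> s < b \<and> isCont (Fd C v) s"
proof -
  interpret real_distribution "PD C v" by (rule rd[OF C v])
  have ca: "countable {x. measure (PD C v) {x} > 0}"
    by (rule finite_borel_measure.countable_atoms[OF finite_borel_measure_M])
  have "\<not> {a<..<b} \<subseteq> {x. measure (PD C v) {x} > 0}"
    using ca uncountable_open_interval[of a b] ab countable_subset by blast
  then obtain s where "s \<in> {a<..<b}" "s \<notin> {x. measure (PD C v) {x} > 0}" by blast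
  then have s: "a < s" "s < b" "\<not> measure (PD C v) {s} > 0" by auto
  then have "measure (PD C v) {s} = 0" using measure_nonneg[of "PD C v" "{s}"] by linarith
  then have "isCont (Fd C v) s" unfolding Fd_def
    by (subst finite_borel_measure.isCont_cdf[OF finite_borel_measure_M])
  then show ?thesis using s by blast
qed

lemma rp2_eq:
  assumes C: "is_copula C" and v: "v \<in> {0..1}" and t: "0 \<le> t" "t < 1"
  shows "right_partial2 (upper_prod C PiC) v t = 1 - Fd C v t"
proof -
  let ?E = "upper_prod C PiC v"
  define T where "T = {t<..<1} \<inter> {s. ?E differentiable (at s)}"
  have nt: "\<not> trivial_limit (at t within T)"
    unfolding trivial_limit_within islimpt_approachable_real not_not
  proof (intro allI impI)
    fix e :: real assume e: "e > 0"
    obtain s where s: "t < s" "s < min (t + e) 1" "isCont (Fd C v) s"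
      using exists_cont[OF C v, of t "min (t + e) 1"] e t by auto
    have "?E differentiable (at s)" using cont_diff[OF C v _ s(3)] s t by auto
    then have "s \<in> T" using s unfolding T_def by auto
    moreover have "s \<noteq> t" "\<bar>s - t\<bar> < e" using s by auto
    ultimately show "\<exists>x'\<in>T. x' \<noteq> t \<and> \<bar>x' - t\<bar> < e" by blast
  qed
  interpret real_distribution "PD C v" by (rule rd[OF C v])
  have rc: "(Fd C v \<longlongrightarrow> Fd C v t) (at_right t)"
    using cdf_is_right_cont[of t] unfolding Fd_def continuous_within by simp
  then have "((\<lambda>s. 1 - Fd C v s) \<longlongrightarrow> 1 - Fd C v t) (at_right t)"
    by (intro tendsto_intros)
  then have l1: "((\<lambda>s. 1 - Fd C v s) \<longlongrightarrow> 1 - Fd C v t) (at t within T)"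
    by (rule tendsto_within_subset) (auto simp: T_def)
  have ev: "eventually (\<lambda>s. 1 - Fd C v s = deriv ?E s) (at t within T)"
    unfolding eventually_at_filter
    by (rule always_eventually) (use t in \<open>auto simp: T_def intro!: deriv_val[OF C v, symmetric]\<close>)
  have "((\<lambda>s. deriv ?E s) \<longlongrightarrow> 1 - Fd C v t) (at t within T)"
    using tendsto_cong[OF ev] l1 by simp
  then have "Lim (at t within T) (\<lambda>s. deriv ?E s) = 1 - Fd C v t"
    by (rule tendsto_Lim[OF nt])
  then show ?thesis unfolding right_partial2_def T_def .
qed

definition Sset :: "(real \<Rightarrow> real) \<Rightarrow> real \<Rightarrow> real set" where
  "Sset F x = {w\<in>{0..<1}. 1 - F w \<le> x} \<union> {1}"

lemma gen_inv_Sset: "gen_inv (\<lambda>w. 1 - F w) x = Inf (Sset F x)"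
  by (simp add: gen_inv_def Sset_def)

lemma Sset_ne: "Sset F x \<noteq> {}" by (simp add: Sset_def)
lemma Sset_bdd: "bdd_below (Sset F x)"
  by (rule bdd_belowI[of _ 0]) (auto simp: Sset_def)
lemma Sset_ge0: "z \<in> Sset F x \<Longrightarrow> 0 \<le> z" by (auto simp: Sset_def)

lemma q_range: "0 \<le> gen_inv (\<lambda>w. 1 - F w) x \<and> gen_inv (\<lambda>w. 1 - F w) x \<le> 1"
proof -
  have a: "0 \<le> Inf (Sset F x)" by (rule cInf_greatest[OF Sset_ne]) (rule Sset_ge0)
  have b: "Inf (Sset F x) \<le> 1" by (rule cInf_lower[OF _ Sset_bdd]) (simp add: Sset_def)
  show ?thesis using a b unfolding gen_inv_Sset by simp
qed

lemma q_antimono: "x1 \<le> x2 \<Longrightarrow> gen_inv (\<lambda>w. 1 - F w) x2 \<le> gen_inv (\<lambda>w. 1 - F w) x1"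
  unfolding gen_inv_Sset
  by (rule cInf_superset_mono[OF Sset_ne Sset_bdd]) (auto simp: Sset_def)

lemma q_char:
  fixes F :: "real \<Rightarrow> real"
  assumes mono: "\<And>a b. a \<le> b \<Longrightarrow> F a \<le> F b"
    and rc: "\<And>y. (F \<longlongrightarrow> F y) (at_right y)"
    and y: "0 \<le> y" "y < 1"
  shows "gen_inv (\<lambda>w. 1 - F w) x \<le> y \<longleftrightarrow> 1 - F y \<le> x"
proof
  assume "1 - F y \<le> x"
  then have "y \<in> Sset F x" using y by (simp add: Sset_def)
  then show "gen_inv (\<lambda>w. 1 - F w) x \<le> y"
    unfolding gen_inv_Sset by (rule cInf_lower[OF _ Sset_bdd])
next
  assume q: "gen_inv (\<lambda>w. 1 - F w) x \<le> y"
  show "1 - F y \<le> x"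
  proof (rule ccontr)
    assume "\<not> 1 - F y \<le> x"
    then have "F y < 1 - x" by simp
    then have "eventually (\<lambda>w. F w < 1 - x) (at_right y)"
      using rc[of y] by (rule order_tendstoD(2)[rotated])
    then obtain b where b: "b > y" "\<And>w. w > y \<Longrightarrow> w < b \<Longrightarrow> F w < 1 - x"
      unfolding eventually_at_right_field by blast
    have "min b 1 \<le> z" if z: "z \<in> Sset F x" for z
    proof (cases "z = 1")
      case False
      then have z01: "0 \<le> z" "z < 1" and Fz: "1 - F z \<le> x" using z by (auto simp: Sset_def)
      show ?thesis
      proof (rule ccontr)
        assume "\<not> min b 1 \<le> z"
        then have zb: "z < b" by simp
        show False
        proof (cases "z \<le> y")
          case True
          then have "F z \<le> F y" by (rule mono)
          then show False using Fz \<open>F y < 1 - x\<close> by simp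
        next
          case False
          then show False using b(2)[of z] zb Fz by simp
        qed
      qed
    qed simp
    then have "min b 1 \<le> Inf (Sset F x)" by (intro cInf_greatest[OF Sset_ne])
    then show False using q b(1) y unfolding gen_inv_Sset by simp
  qed
qed

lemma meas_eq: "A = B \<Longrightarrow> measure M A = measure M B" by simp

lemma q_dist:
  fixes F :: "real \<Rightarrow> real"
  assumes mono: "\<And>a b. a \<le> b \<Longrightarrow> F a \<le> F b"
    and rc: "\<And>y. (F \<longlongrightarrow> F y) (at_right y)"
    and neg: "\<And>y. y < 0 \<Longrightarrow> F y = 0" and one: "\<And>y. 1 \<le> y \<Longrightarrow> F y = 1"
  shows "measure lborel {t\<in>{0<..<1}. gen_inv (\<lambda>w. 1 - F w) t \<le> y} = F y"
proof -
  consider "y < 0" | "1 \<le> y" | "0 \<le> y" "y < 1" by linarith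
  then show ?thesis
  proof cases
    case 1
    have "\<not> gen_inv (\<lambda>w. 1 - F w) t \<le> y" for t using q_range[of F t] 1 by linarith
    then have "{t\<in>{0<..<1}. gen_inv (\<lambda>w. 1 - F w) t \<le> y} = {}" by auto
    then have "measure lborel {t\<in>{0<..<1}. gen_inv (\<lambda>w. 1 - F w) t \<le> y} = measure lborel ({}::real set)"
      by (rule meas_eq)
    then show ?thesis using neg[OF 1] by simp
  next
    case 2
    have "gen_inv (\<lambda>w. 1 - F w) t \<le> y" for t using q_range[of F t] 2 by linarith
    then have "{t\<in>{0<..<1}. gen_inv (\<lambda>w. 1 - F w) t \<le> y} = {0<..<1}" by auto
    then have "measure lborel {t\<in>{0<..<1}. gen_inv (\<lambda>w. 1 - F w) t \<le> y} = measure lborel {0<..<1::real}"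
      by (rule meas_eq)
    then show ?thesis using one[OF 2] by simp
  next
    case 3
    have F01: "0 \<le> F y" "F y \<le> 1"
      using mono[of "-1" y] mono[of y 1] neg[of "-1"] one[of 1] 3 by auto
    have e: "{t\<in>{0<..<1}. gen_inv (\<lambda>w. 1 - F w) t \<le> y} = {t\<in>{0<..<1}. 1 - F y \<le> t}"
      using q_char[OF mono rc 3] by blast
    show ?thesis
    proof (cases "F y = 1")
      case True
      then have "{t\<in>{0<..<1}. 1 - F y \<le> t} = {0<..<1}" by auto
      then show ?thesis using e True by simp
    next
      case False
      then have "{t\<in>{0<..<1}. 1 - F y \<le> t} = {1 - F y..<1}" using F01 by auto
      then show ?thesis using e F01 by simp
    qed
  qed
qed

lemma upset_measure:
  fixes D :: "real set"
  assumes sub: "D \<subseteq> {0<..<1}" and up: "\<And>s t. s \<in> D \<Longrightarrow> s \<le> t \<Longrightarrow> t < 1 \<Longrightarrow> t \<in> D"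
  shows "\<And>t. t \<in> D \<Longrightarrow> 1 - t \<le> measure lborel D"
    and "\<And>t. t \<in> {0<..<1} \<Longrightarrow> t \<notin> D \<Longrightarrow> measure lborel D \<le> 1 - t"
proof -
  have main: "\<exists>a. 0 \<le> a \<and> a \<le> 1 \<and> measure lborel D = 1 - a \<and> (\<forall>t\<in>D. a \<le> t) \<and> (\<forall>t\<in>{0<..<1}. a < t \<longrightarrow> t \<in> D)"
    if ne: "D \<noteq> {}"
  proof -
    define a where "a = Inf D"
    have bdd: "bdd_below D" by (rule bdd_belowI[of _ 0]) (use sub in auto)
    have lo: "\<forall>t\<in>D. a \<le> t" unfolding a_def using cInf_lower[OF _ bdd] by blast
    have hi: "\<forall>t\<in>{0<..<1}. a < t \<longrightarrow> t \<in> D"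
    proof (intro ballI impI)
      fix t assume t: "t \<in> {0<..<1}" "a < t"
      then obtain d where "d \<in> D" "d < t" using cInf_less_iff[OF ne bdd] unfolding a_def by blast
      then show "t \<in> D" using up[of d t] t by auto
    qed
    have a0: "0 \<le> a" unfolding a_def by (rule cInf_greatest[OF ne]) (use sub in auto)
    obtain d where d: "d \<in> D" using ne by blast
    have a1: "a \<le> 1" using lo d sub by force
    have eq: "D = {a<..<1} \<union> (D \<inter> {a})"
    proof
      show "D \<subseteq> {a<..<1} \<union> (D \<inter> {a})"
      proof
        fix t assume "t \<in> D"
        then show "t \<in> {a<..<1} \<union> (D \<inter> {a})" using lo sub by force
      qed
      show "{a<..<1} \<union> (D \<inter> {a}) \<subseteq> D" using hi a0 by auto
    qed
    have "measure lborel D = measure lborel ({a<..<1} \<union> (D \<inter> {a}))" using eq by simp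
    also have "\<dots> = measure lborel {a<..<1}"
      by (rule measure_Un_null_set) (auto intro: finite_imp_null_set_lborel)
    also have "\<dots> = 1 - a" using a1 by simp
    finally show ?thesis using a0 a1 lo hi by blast
  qed
  show "1 - t \<le> measure lborel D" if t: "t \<in> D" for t
  proof -
    obtain a where "0 \<le> a \<and> a \<le> 1 \<and> measure lborel D = 1 - a \<and> (\<forall>t\<in>D. a \<le> t)"
      using main t by blast
    then show ?thesis using t by auto
  qed
  show "measure lborel D \<le> 1 - t" if t: "t \<in> {0<..<1}" "t \<notin> D" for t
  proof (cases "D = {}")
    case True then show ?thesis using t by simp
  next
    case False
    then obtain a where a: "0 \<le> a \<and> a \<le> 1 \<and> measure lborel D = 1 - a \<and> (\<forall>t\<in>{0<..<1}. a < t \<longrightarrow> t \<in> D)"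
      using main by blast
    then have "t \<le> a" using t by force
    then show ?thesis using a by simp
  qed
qed

definition goodF :: "(real \<Rightarrow> real) \<Rightarrow> bool" where
  "goodF F \<longleftrightarrow> (\<forall>a b. a \<le> b \<longrightarrow> F a \<le> F b) \<and> (\<forall>y. (F \<longlongrightarrow> F y) (at_right y)) \<and>
     (\<forall>y. y < 0 \<longrightarrow> F y = 0) \<and> (\<forall>y. 1 \<le> y \<longrightarrow> F y = 1)"

definition goodg :: "(real \<Rightarrow> real) \<Rightarrow> (real \<Rightarrow> real) \<Rightarrow> bool" where
  "goodg g F \<longleftrightarrow> (\<forall>s t. 0 < s \<longrightarrow> s \<le> t \<longrightarrow> t < 1 \<longrightarrow> g t \<le> g s) \<and>
     (\<forall>y. measure lborel {t\<in>{0<..<1}. g t \<le> y} = F y)"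

lemma goodF_D:
  assumes "goodF F"
  shows "\<And>a b. a \<le> b \<Longrightarrow> F a \<le> F b" "\<And>y. (F \<longlongrightarrow> F y) (at_right y)"
    "\<And>y. y < 0 \<Longrightarrow> F y = 0" "\<And>y. 1 \<le> y \<Longrightarrow> F y = 1"
  using assms unfolding goodF_def by auto

lemma goodg_U:
  assumes "goodg g F"
  shows "\<And>t y. t \<in> {0<..<1} \<Longrightarrow> g t \<le> y \<Longrightarrow> 1 - t \<le> F y"
    and "\<And>t y. t \<in> {0<..<1} \<Longrightarrow> \<not> g t \<le> y \<Longrightarrow> F y \<le> 1 - t"
proof -
  have dec: "\<And>s t. 0 < s \<Longrightarrow> s \<le> t \<Longrightarrow> t < 1 \<Longrightarrow> g t \<le> g s"
    and dst: "\<And>y. measure lborel {t\<in>{0<..<1}. g t \<le> y} = F y"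
    using assms unfolding goodg_def by auto
  have up: "r \<in> {t\<in>{0<..<1}. g t \<le> y}" if "s \<in> {t\<in>{0<..<1}. g t \<le> y}" "s \<le> r" "r < 1" for s r y
  proof -
    have "g r \<le> g s" using dec[of s r] that by auto
    then show ?thesis using that by auto
  qed
  show "1 - t \<le> F y" if t: "t \<in> {0<..<1}" "g t \<le> y" for t y
  proof -
    have "1 - t \<le> measure lborel {t\<in>{0<..<1}. g t \<le> y}"
    proof (rule upset_measure(1))
      show "{t\<in>{0<..<1}. g t \<le> y} \<subseteq> {0<..<1}" by auto
      show "t \<in> {t\<in>{0<..<1}. g t \<le> y}" using t by auto
    qed (rule up)
    then show ?thesis using dst[of y] by simp
  qed
  show "F y \<le> 1 - t" if t: "t \<in> {0<..<1}" "\<not> g t \<le> y" for t y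
  proof -
    have "measure lborel {t\<in>{0<..<1}. g t \<le> y} \<le> 1 - t"
    proof (rule upset_measure(2))
      show "{t\<in>{0<..<1}. g t \<le> y} \<subseteq> {0<..<1}" by auto
      show "t \<notin> {t\<in>{0<..<1}. g t \<le> y}" using t by auto
    qed (use t up in auto)
    then show ?thesis using dst[of y] by simp
  qed
qed

lemma g_range:
  assumes F: "goodF F" and g: "goodg g F" and t: "t \<in> {0<..<1}"
  shows "0 \<le> g t" "g t \<le> 1"
proof -
  show "0 \<le> g t"
  proof (rule ccontr)
    assume "\<not> 0 \<le> g t"
    then have "1 - t \<le> F (g t)" using goodg_U(1)[OF g t] by simp
    moreover have "F (g t) = 0" using goodF_D(3)[OF F] \<open>\<not> 0 \<le> g t\<close> by simp
    ultimately show False using t by simp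
  qed
  show "g t \<le> 1"
  proof (rule ccontr)
    assume "\<not> g t \<le> 1"
    then have "F 1 \<le> 1 - t" using goodg_U(2)[OF g t] by simp
    moreover have "F 1 = 1" using goodF_D(4)[OF F] by simp
    ultimately show False using t by simp
  qed
qed

lemma q_le_g:
  assumes F: "goodF F" and g: "goodg g F" and t: "t \<in> {0<..<1}"
  shows "gen_inv (\<lambda>w. 1 - F w) t \<le> g t"
proof (cases "g t < 1")
  case True
  have "1 - t \<le> F (g t)" using goodg_U(1)[OF g t] by simp
  then have "1 - F (g t) \<le> t" by simp
  then show ?thesis
    using q_char[OF goodF_D(1)[OF F] goodF_D(2)[OF F] g_range(1)[OF F g t] True] by blast
next
  case False
  then show ?thesis using q_range[of F t] by simp
qed

lemma g_le_q:
  assumes F: "goodF F" and g: "goodg g F" and t1: "0 < t1" and t12: "t1 < t2" and t2: "t2 < 1"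
  shows "g t2 \<le> gen_inv (\<lambda>w. 1 - F w) t1"
proof (rule ccontr)
  let ?y = "gen_inv (\<lambda>w. 1 - F w) t1"
  assume a: "\<not> g t2 \<le> ?y"
  have t2': "t2 \<in> {0<..<1}" using t1 t12 t2 by simp
  have y1: "?y < 1" using a g_range(2)[OF F g t2'] by simp
  have y0: "0 \<le> ?y" using q_range[of F t1] by simp
  have "1 - F ?y \<le> t1"
    using q_char[OF goodF_D(1)[OF F] goodF_D(2)[OF F] y0 y1, of t1] by simp
  moreover have "F ?y \<le> 1 - t2" using goodg_U(2)[OF g t2' a] .
  ultimately show False using t12 by simp
qed

lemma g_le_q':
  assumes F: "goodF F" and g: "goodg g F" and st: "s < t" and t: "t \<in> {0<..<1}"
  shows "g t \<le> gen_inv (\<lambda>w. 1 - F w) s"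
proof -
  define t1 where "t1 = (max s 0 + t) / 2"
  have "0 < t1" "t1 < t" "s \<le> t1" using st t unfolding t1_def by (auto simp: max_def)
  then have "g t \<le> gen_inv (\<lambda>w. 1 - F w) t1" using g_le_q[OF F g] t by auto
  also have "\<dots> \<le> gen_inv (\<lambda>w. 1 - F w) s" by (rule q_antimono) fact
  finally show ?thesis .
qed

lemma anti_int:
  fixes h :: "real \<Rightarrow> real"
  assumes "\<And>x y. x \<le> y \<Longrightarrow> h y \<le> h x"
  shows "h integrable_on {a..b}"
proof -
  have "mono_on {a..b} (\<lambda>x. - h x)" unfolding mono_on_def using assms by auto
  then have "(\<lambda>x. - h x) integrable_on {a..b}" by (rule integrable_on_mono_on)
  then have "(\<lambda>x. - (- h x)) integrable_on {a..b}" by (rule integrable_neg)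
  then show ?thesis by simp
qed

lemma integral_eq:
  assumes F: "goodF F" and g: "goodg g F" and u: "0 \<le> u" "u \<le> 1"
  shows "integral {0..u} g = integral {0..u} (gen_inv (\<lambda>w. 1 - F w))"
proof -
  let ?q = "gen_inv (\<lambda>w. 1 - F w)"
  define g' where "g' t = (if t \<in> {0<..<1} then g t else ?q t)" for t
  have dec: "\<And>s t. 0 < s \<Longrightarrow> s \<le> t \<Longrightarrow> t < 1 \<Longrightarrow> g t \<le> g s"
    using g unfolding goodg_def by auto
  have qa: "\<And>x y. x \<le> y \<Longrightarrow> ?q y \<le> ?q x" by (rule q_antimono)
  have ga: "g' y \<le> g' x" if xy: "x \<le> y" for x y
  proof (cases "x \<in> {0<..<1}")
    case True
    show ?thesis
    proof (cases "y \<in> {0<..<1}")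
      case True
      then show ?thesis using \<open>x \<in> {0<..<1}\<close> xy dec[of x y] by (simp add: g'_def)
    next
      case False
      then have "1 \<le> y" using True xy by auto
      have "?q y \<le> ?q x" using qa xy by blast
      also have "\<dots> \<le> g x" by (rule q_le_g[OF F g True])
      finally show ?thesis using True False by (auto simp: g'_def)
    qed
  next
    case False
    show ?thesis
    proof (cases "y \<in> {0<..<1}")
      case True
      then have "x < y" using False xy by auto
      then have "g y \<le> ?q x" by (rule g_le_q'[OF F g _ True])
      then show ?thesis using True False by (auto simp: g'_def)
    next
      case False
      then show ?thesis using \<open>x \<notin> {0<..<1}\<close> qa[OF xy] by (auto simp: g'_def)
    qed
  qed
  have gi: "g' integrable_on {a..b}" for a b by (rule anti_int) (rule ga)
  have qi: "?q integrable_on {a..b}" for a b by (rule anti_int) (rule qa)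
  have q01: "0 \<le> ?q t" "?q t \<le> 1" for t using q_range[of F t] by auto
  have g'01: "0 \<le> g' t" "g' t \<le> 1" for t
    using g_range[OF F g, of t] q01[of t] by (auto simp: g'_def)
  have spike: "integral {0..u} g = integral {0..u} g'"
    by (rule integral_spike[of "{0,1}"]) (use u in \<open>auto simp: g'_def\<close>)
  have "integral {0..u} g' = integral {0..u} ?q"
  proof (cases "u = 0")
    case True then show ?thesis by simp
  next
    case False
    then have u0: "0 < u" using u by simp
    have A: "integral {0..u} ?q \<le> integral {0..u} g'"
    proof (rule integral_le[OF qi gi])
      fix t assume "t \<in> {0..u}"
      show "?q t \<le> g' t"
      proof (cases "t \<in> {0<..<1}")
        case True then show ?thesis using q_le_g[OF F g True] by (simp add: g'_def)
      qed (auto simp: g'_def)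
    qed
    have B: "integral {0..u} g' \<le> integral {0..u} ?q + e" if e: "e > 0" for e
    proof -
      define \<delta> where "\<delta> = min e (u / 2)"
      have d: "0 < \<delta>" "\<delta> < u" "\<delta> \<le> e" using e u0 unfolding \<delta>_def by auto
      have "integral {0..u} g' = integral {0..\<delta>} g' + integral {\<delta>..u} g'"
        using Henstock_Kurzweil_Integration.integral_combine[where a=0 and c=\<delta> and b=u and f=g'] d gi by simp
      also have "integral {0..\<delta>} g' \<le> integral {0..\<delta>} (\<lambda>_. 1::real)"
        by (rule integral_le[OF gi]) (auto intro: g'01)
      also have "integral {0..\<delta>} (\<lambda>_. 1::real) = \<delta>" using d by simp
      also have "integral {\<delta>..u} g' \<le> integral {\<delta>..u} (?q \<circ> (+) (-\<delta>))"
      proof (rule integral_le[OF gi])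
        show "(?q \<circ> (+) (-\<delta>)) integrable_on {\<delta>..u}"
          by (rule anti_int) (auto intro: qa)
        fix t assume t: "t \<in> {\<delta>..u}"
        show "g' t \<le> (?q \<circ> (+) (-\<delta>)) t"
        proof (cases "t \<in> {0<..<1}")
          case True
          have "g t \<le> ?q (t - \<delta>)" by (rule g_le_q'[OF F g _ True]) (use d in simp)
          then show ?thesis using True by (simp add: g'_def)
        next
          case False
          then show ?thesis using qa[of "t - \<delta>" t] d by (auto simp: g'_def)
        qed
      qed
      also have "integral {\<delta>..u} (?q \<circ> (+) (-\<delta>)) = integral {0..u - \<delta>} ?q"
        using integral_shift_Icc_real[where a=\<delta> and b=u and f="?q" and c="-\<delta>"] by simp
      also have "integral {0..u - \<delta>} ?q \<le> integral {0..u} ?q"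
      proof -
        have "integral {0..u - \<delta>} ?q + integral {u - \<delta>..u} ?q = integral {0..u} ?q"
          using Henstock_Kurzweil_Integration.integral_combine[where a=0 and c="u - \<delta>" and b=u and f="?q"] d qi by simp
        moreover have "0 \<le> integral {u - \<delta>..u} ?q" by (rule integral_nonneg[OF qi]) (rule q01)
        ultimately show ?thesis by simp
      qed
      finally show ?thesis using d by simp
    qed
    have "integral {0..u} g' \<le> integral {0..u} ?q" by (rule field_le_epsilon) (rule B)
    then show ?thesis using A by simp
  qed
  then show ?thesis using spike by simp
qed

lemma goodF_Fd:
  assumes C: "is_copula C" and v: "v \<in> {0..1}"
  shows "goodF (Fd C v)"
proof -
  interpret real_distribution "PD C v" by (rule rd[OF C v])
  have rc: "(Fd C v \<longlongrightarrow> Fd C v y) (at_right y)" for y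
    using cdf_is_right_cont[of y] unfolding Fd_def continuous_within by simp
  show ?thesis unfolding goodF_def
  proof (intro conjI allI impI)
    show "Fd C v a \<le> Fd C v b" if "a \<le> b" for a b using Fd_mono[OF C v that] .
    show "(Fd C v \<longlongrightarrow> Fd C v y) (at_right y)" for y by (rule rc)
    show "Fd C v y = 0" if "y < 0" for y using Fd_neg[OF C v that] .
    show "Fd C v y = 1" if "1 \<le> y" for y using Fd_ge1[OF C v that] .
  qed
qed

lemma goodg_rearr:
  assumes C: "is_copula C" and v: "v \<in> {0..1}"
  shows "goodg (decr_rearr (partial2 C v)) (Fd C v)"
proof -
  let ?P = "\<lambda>g::real\<Rightarrow>real. (\<forall>s t. 0 < s \<longrightarrow> s \<le> t \<longrightarrow> t < 1 \<longrightarrow> g t \<le> g s) \<and>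
      (\<forall>y. measure lborel {t\<in>{0<..<1}. g t \<le> y} = measure lborel {t\<in>{0<..<1}. partial2 C v t \<le> y})"
  have F: "goodF (Fd C v)" by (rule goodF_Fd[OF C v])
  have "?P (gen_inv (\<lambda>w. 1 - Fd C v w))"
  proof (intro conjI allI impI)
    fix s t :: real assume "s \<le> t"
    then show "gen_inv (\<lambda>w. 1 - Fd C v w) t \<le> gen_inv (\<lambda>w. 1 - Fd C v w) s" by (rule q_antimono)
  next
    fix y
    have "measure lborel {t\<in>{0<..<1}. gen_inv (\<lambda>w. 1 - Fd C v w) t \<le> y} = Fd C v y"
      by (rule q_dist[OF goodF_D[OF F]])
    then show "measure lborel {t\<in>{0<..<1}. gen_inv (\<lambda>w. 1 - Fd C v w) t \<le> y} =
               measure lborel {t\<in>{0<..<1}. partial2 C v t \<le> y}"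
      by (rule trans[OF _ Fd_eq[OF C v]])
  qed
  note Pq = this
  define P where "P = ?P"
  have Pq': "P (gen_inv (\<lambda>w. 1 - Fd C v w))" unfolding P_def by (rule Pq)
  have eq: "decr_rearr (partial2 C v) = (SOME g. P g)" unfolding decr_rearr_def P_def by (rule refl)
  have "P (SOME g. P g)" by (rule someI[of P, OF Pq'])
  then have PP: "?P (decr_rearr (partial2 C v))" unfolding eq P_def .
  have A: "\<forall>s t. 0 < s \<longrightarrow> s \<le> t \<longrightarrow> t < 1 \<longrightarrow> decr_rearr (partial2 C v) t \<le> decr_rearr (partial2 C v) s"
    using conjunct1[OF PP] .
  have B: "measure lborel {t\<in>{0<..<1}. decr_rearr (partial2 C v) t \<le> y} = measure lborel {t\<in>{0<..<1}. partial2 C v t \<le> y}" for y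
    using spec[OF conjunct2[OF PP], of y] .
  show ?thesis unfolding goodg_def
  proof (rule conjI[OF _ allI])
    show "\<forall>s t. 0 < s \<longrightarrow> s \<le> t \<longrightarrow> t < 1 \<longrightarrow> decr_rearr (partial2 C v) t \<le> decr_rearr (partial2 C v) s"
      by (rule A)
    fix y
    show "measure lborel {t\<in>{0<..<1}. decr_rearr (partial2 C v) t \<le> y} = Fd C v y"
      unfolding B Fd_eq[OF C v] ..
  qed
qed

lemma gen_inv_rp2:
  assumes C: "is_copula C" and v: "v \<in> {0..1}"
  shows "gen_inv (right_partial2 (upper_prod C PiC) v) = gen_inv (\<lambda>w. 1 - Fd C v w)"
proof
  fix x
  have "{t\<in>{0..<1}. right_partial2 (upper_prod C PiC) v t \<le> x} = {t\<in>{0..<1}. 1 - Fd C v t \<le> x}"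
    using rp2_eq[OF C v] by auto
  then show "gen_inv (right_partial2 (upper_prod C PiC) v) x = gen_inv (\<lambda>w. 1 - Fd C v w) x"
    unfolding gen_inv_def by simp
qed

lemma rearranged_eq:
  assumes C: "is_copula C"
  shows "rearranged C = S_op (upper_prod C PiC)"
proof (intro ext)
  fix v u :: real
  show "rearranged C v u = S_op (upper_prod C PiC) v u"
  proof (cases "v \<in> {0..1} \<and> u \<in> {0..1}")
    case True
    then have v: "v \<in> {0..1}" and u: "0 \<le> u" "u \<le> 1" by auto
    have "integral {0..u} (decr_rearr (partial2 C v)) = integral {0..u} (gen_inv (\<lambda>w. 1 - Fd C v w))"
      by (rule integral_eq[OF goodF_Fd[OF C v] goodg_rearr[OF C v] u])
    moreover have "rearranged C v u = integral {0..u} (decr_rearr (partial2 C v))"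
      unfolding rearranged_def restrict_sq_def by (rule if_P[OF True])
    moreover have "S_op (upper_prod C PiC) v u = integral {0..u} (gen_inv (right_partial2 (upper_prod C PiC) v))"
      unfolding S_op_def restrict_sq_def by (rule if_P[OF True])
    ultimately show ?thesis unfolding gen_inv_rp2[OF C v] by simp
  next
    case False
    have "rearranged C v u = 0"
      unfolding rearranged_def restrict_sq_def by (rule if_not_P[OF False])
    moreover have "S_op (upper_prod C PiC) v u = 0"
      unfolding S_op_def restrict_sq_def by (rule if_not_P[OF False])
    ultimately show ?thesis by simp
  qed
qed

theorem mainTheorem5:
  fixes mu :: "(real \<Rightarrow> real \<Rightarrow> real) \<Rightarrow> real"
    and C :: "real \<Rightarrow> real \<Rightarrow> real"
  assumes mu_range: "\<forall>D. is_SI_copula D \<longrightarrow> 0 \<le> mu D \<and> mu D \<le> 1"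
    and mu_zero: "\<forall>D. is_SI_copula D \<longrightarrow> (mu D = 0 \<longleftrightarrow> D = PiC)"
    and mu_one: "\<forall>D. is_SI_copula D \<longrightarrow> (mu D = 1 \<longleftrightarrow> D = MC)"
    and C: "is_copula C"
  shows "Rmu mu C = mu (S_op (upper_prod C PiC))"
  unfolding Rmu_def rearranged_eq[OF C] ..

end
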